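(* Let $S=\{x_1,\dots,x_N\}\subset\mathbb{R}^n$ be a two-distance tight frame for $\mathbb{R}^n$ with inner products $a,b$ satisfying $a^2\neq b^2$. Then $S$ is regular: for every $i$, the number $N_{a,i}=|\{j:\langle x_i,x_j\rangle=a\}|$ equals $$N_a=\frac{(N/n)-1-(N-1)b^2}{a^2-b^2}.$$ Moreover, either $-n(a+b)-nab(N-1)=N-n$ (this happens exactly when each row of the Gram matrix $G=(\langle x_i,x_j\rangle)$ sums to $0$), or $(N-n)(a+b)-nab(N-1)=N-n$ (this happens exactly when each row of $G$ sums to $N/n$).
   Context: A two-distance tight frame for $\mathbb{R}^n$ is a finite set of unit vectors $\{x_1,\dots,x_N\}\subset\mathbb{R}^n$ such that (1) there are two real numbers $a\neq b$ with $\langle x_i,x_j\rangle\in\{a,b\}$ for all $i\neq j$, and (2) $\sum_{i=1}^N\langle x,x_i\rangle^2=\frac{N}{n}\|x\|^2$ for all $x\in\mathbb{R}^n$. *)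

theory Defs
  imports "HOL-Analysis.Analysis"
begin

definition two_distance_tight_frame :: "(real^'n) set \<Rightarrow> real \<Rightarrow> real \<Rightarrow> bool" where
  "two_distance_tight_frame S a b \<longleftrightarrow>
     finite S \<and> S \<noteq> {} \<and> (\<forall>x\<in>S. norm x = 1) \<and> a \<noteq> b \<and>
     (\<forall>x\<in>S. \<forall>y\<in>S. x \<noteq> y \<longrightarrow> x \<bullet> y = a \<or> x \<bullet> y = b) \<and>
     (\<forall>v::real^'n. (\<Sum>y\<in>S. (v \<bullet> y)^2) = real (card S) / real CARD('n) * (norm v)^2)"

end

theory Submission
  imports Defs
begin

lemma split_sum:
  fixes S :: "(real^'n) set"
  assumes frame: "two_distance_tight_frame S a b" and x: "x \<in> S"
  shows "(\<Sum>y\<in>S. f (x \<bullet> y)) = f 1 + real (card {y\<in>S. y \<noteq> x \<and> x \<bullet> y = a}) * f a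
            + real (card {y\<in>S. y \<noteq> x \<and> x \<bullet> y \<noteq> a}) * f b"
    and "card {y\<in>S. y \<noteq> x \<and> x \<bullet> y = a} + card {y\<in>S. y \<noteq> x \<and> x \<bullet> y \<noteq> a} = card S - 1"
proof -
  have fin: "finite S" and nx: "norm x = 1"
    and two: "\<And>y. y \<in> S \<Longrightarrow> y \<noteq> x \<Longrightarrow> x \<bullet> y = a \<or> x \<bullet> y = b"
    using frame x unfolding two_distance_tight_frame_def by auto
  have xx: "x \<bullet> x = 1" using nx by (metis power2_norm_eq_inner power_one)
  define A where "A = {y\<in>S. y \<noteq> x \<and> x \<bullet> y = a}"
  define B where "B = {y\<in>S. y \<noteq> x \<and> x \<bullet> y \<noteq> a}"
  have fA: "finite A" and fB: "finite B" using fin by (auto simp: A_def B_def)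
  have AB: "A \<union> B = S - {x}" and dis: "A \<inter> B = {}" by (auto simp: A_def B_def)
  have "(\<Sum>y\<in>S. f (x \<bullet> y)) = f (x \<bullet> x) + (\<Sum>y\<in>S - {x}. f (x \<bullet> y))"
    using fin x by (simp add: sum.remove)
  also have "(\<Sum>y\<in>S - {x}. f (x \<bullet> y)) = (\<Sum>y\<in>A. f (x \<bullet> y)) + (\<Sum>y\<in>B. f (x \<bullet> y))"
    using sum.union_disjoint[OF fA fB dis, of "\<lambda>y. f (x \<bullet> y)"] AB by simp
  also have "(\<Sum>y\<in>A. f (x \<bullet> y)) = (\<Sum>y\<in>A. f a)"
    by (rule sum.cong) (auto simp: A_def)
  also have "(\<Sum>y\<in>B. f (x \<bullet> y)) = (\<Sum>y\<in>B. f b)"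
    by (rule sum.cong) (use two in \<open>auto simp: B_def\<close>)
  finally show "(\<Sum>y\<in>S. f (x \<bullet> y)) = f 1 + real (card {y\<in>S. y \<noteq> x \<and> x \<bullet> y = a}) * f a
            + real (card {y\<in>S. y \<noteq> x \<and> x \<bullet> y \<noteq> a}) * f b"
    by (simp add: xx A_def B_def)
  have "card A + card B = card (S - {x})"
    using card_Un_disjoint[OF fA fB dis] AB by simp
  then show "card {y\<in>S. y \<noteq> x \<and> x \<bullet> y = a} + card {y\<in>S. y \<noteq> x \<and> x \<bullet> y \<noteq> a} = card S - 1"
    using fin x by (simp add: A_def B_def)
qed

theorem theorem2p4:
  fixes S :: "(real^'n) set" and a b :: real
  assumes frame: "two_distance_tight_frame S a b"
    and ab: "a^2 \<noteq> b^2"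
  defines "N \<equiv> real (card S)" and "n \<equiv> real CARD('n)"
  shows "(\<forall>x\<in>S. real (card {y\<in>S. y \<noteq> x \<and> x \<bullet> y = a})
              = ((N / n) - 1 - (N - 1) * b^2) / (a^2 - b^2))
       \<and> (- n * (a + b) - n * a * b * (N - 1) = N - n
          \<or> (N - n) * (a + b) - n * a * b * (N - 1) = N - n)
       \<and> (- n * (a + b) - n * a * b * (N - 1) = N - n
          \<longleftrightarrow> (\<forall>x\<in>S. (\<Sum>y\<in>S. x \<bullet> y) = 0))
       \<and> ((N - n) * (a + b) - n * a * b * (N - 1) = N - n
          \<longleftrightarrow> (\<forall>x\<in>S. (\<Sum>y\<in>S. x \<bullet> y) = N / n))"
proof -
  have fin: "finite S" and ne: "S \<noteq> {}" and nrm: "\<forall>x\<in>S. norm x = 1"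
    and tight: "\<And>v::real^'n. (\<Sum>y\<in>S. (v \<bullet> y)^2) = N / n * (norm v)^2"
    using frame unfolding two_distance_tight_frame_def N_def n_def by auto
  have Npos: "N > 0" using fin ne by (simp add: N_def card_gt_0_iff)
  have npos: "n > 0" by (simp add: n_def)
  have apb: "a + b \<noteq> 0" using ab by (metis add.inverse_unique power2_minus)
  have amb: "a - b \<noteq> 0" using ab by auto
  have a2b2: "a^2 - b^2 \<noteq> 0" using ab by auto
  define K where "K = ((N / n) - 1 - (N - 1) * b^2) / (a^2 - b^2)"
  define r where "r = 1 + K * a + (N - 1 - K) * b"
  have kx: "real (card {y\<in>S. y \<noteq> x \<and> x \<bullet> y = a}) = K" and rx: "(\<Sum>y\<in>S. x \<bullet> y) = r"
    if x: "x \<in> S" for x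
  proof -
    let ?ka = "real (card {y\<in>S. y \<noteq> x \<and> x \<bullet> y = a})"
    let ?kb = "real (card {y\<in>S. y \<noteq> x \<and> x \<bullet> y \<noteq> a})"
    have c: "?ka + ?kb = N - 1"
      using split_sum(2)[OF frame x] fin ne x unfolding N_def
      by (metis (no_types, lifting) One_nat_def card_gt_0_iff diff_Suc_1 le_add_diff_inverse2 less_eq_Suc_le of_nat_1 of_nat_add of_nat_diff)
    have s2: "(\<Sum>y\<in>S. (x \<bullet> y)^2) = 1 + ?ka * a^2 + ?kb * b^2"
      using split_sum(1)[OF frame x, of "\<lambda>t. t^2"] by simp
    have "(\<Sum>y\<in>S. (x \<bullet> y)^2) = N / n" using tight[of x] nrm x by simp
    have kb: "?kb = N - 1 - ?ka" using c by simp
    have "N / n = 1 + ?ka * a^2 + (N - 1 - ?ka) * b^2"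
      using s2 kb \<open>(\<Sum>y\<in>S. (x \<bullet> y)^2) = N / n\<close> by simp
    then have "?ka * (a^2 - b^2) = N / n - 1 - (N - 1) * b^2"
      by (simp add: algebra_simps)
    then show k: "?ka = K" unfolding K_def using a2b2 by (simp add: field_simps)
    have "(\<Sum>y\<in>S. x \<bullet> y) = 1 + ?ka * a + ?kb * b"
      using split_sum(1)[OF frame x, of "\<lambda>t. t"] by simp
    then show "(\<Sum>y\<in>S. x \<bullet> y) = r" unfolding r_def using k c
      by (smt (verit))
  qed
  define s where "s = (\<Sum>y\<in>S. y)"
  have ss: "s \<bullet> s = N * r"
  proof -
    have "s \<bullet> s = (\<Sum>x\<in>S. x \<bullet> s)" by (simp add: s_def inner_sum_left)
    also have "\<dots> = (\<Sum>x\<in>S. r)"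
      by (rule sum.cong) (auto simp: s_def inner_sum_right rx)
    finally show ?thesis by (simp add: N_def)
  qed
  have "(\<Sum>z\<in>S. (s \<bullet> z)^2) = (\<Sum>z\<in>S. r^2)"
  proof (rule sum.cong)
    fix z assume z: "z \<in> S"
    have "s \<bullet> z = z \<bullet> s" by (simp add: inner_commute)
    also have "\<dots> = (\<Sum>y\<in>S. z \<bullet> y)" unfolding s_def by (simp add: inner_sum_right)
    also have "\<dots> = r" using rx[OF z] .
    finally show "(s \<bullet> z)^2 = r^2" by simp
  qed simp
  then have "N * r^2 = N / n * (N * r)" using tight[of s] ss
    by (simp add: N_def power2_norm_eq_inner)
  then have "N * r^2 = N * (N / n * r)" by (simp add: algebra_simps)
  then have "r^2 = N / n * r" using Npos by (metis mult_cancel_left less_irrefl)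
  then have "r * (r - N / n) = 0" by (simp add: power2_eq_square algebra_simps)
  then have r01: "r = 0 \<or> r = N / n" by simp
  have H1: "K * (a^2 - b^2) = N / n - 1 - (N - 1) * b^2" unfolding K_def using a2b2 by simp
  define P where "P = N / n"
  have nP: "N = n * P" unfolding P_def using npos by simp
  have H1': "K * (a - b) * (a + b) = P - 1 - (N - 1) * b^2"
    using H1 unfolding P_def by (simp add: power2_eq_square algebra_simps)
  have r0: "r = 0 \<longleftrightarrow> K * (a - b) = -1 - (N - 1) * b" unfolding r_def by (simp add: algebra_simps)
  also have "\<dots> \<longleftrightarrow> K * (a - b) * (a + b) = (-1 - (N - 1) * b) * (a + b)" using apb by simp
  also have "\<dots> \<longleftrightarrow> P - 1 = -(a + b) - (N - 1) * a * b" unfolding H1'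
    by (simp add: power2_eq_square algebra_simps)
  also have "\<dots> \<longleftrightarrow> n * (P - 1) = n * (-(a + b) - (N - 1) * a * b)" using npos by simp
  also have "\<dots> \<longleftrightarrow> - n * (a + b) - n * a * b * (N - 1) = N - n" unfolding nP
    by (simp add: algebra_simps) (smt (verit))
  finally have E1: "- n * (a + b) - n * a * b * (N - 1) = N - n \<longleftrightarrow> r = 0" by simp
  have "r = N / n \<longleftrightarrow> K * (a - b) = P - 1 - (N - 1) * b" unfolding r_def P_def by (simp add: algebra_simps)
  also have "\<dots> \<longleftrightarrow> K * (a - b) * (a + b) = (P - 1 - (N - 1) * b) * (a + b)" using apb by simp
  also have "\<dots> \<longleftrightarrow> P - 1 = (a + b) * (P - 1) - (N - 1) * a * b" unfolding H1'
    by (simp add: power2_eq_square algebra_simps)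
  also have "\<dots> \<longleftrightarrow> n * (P - 1) = n * ((a + b) * (P - 1) - (N - 1) * a * b)" using npos by simp
  also have "\<dots> \<longleftrightarrow> (N - n) * (a + b) - n * a * b * (N - 1) = N - n" unfolding nP
    by (simp add: algebra_simps) (smt (verit))
  finally have E2: "(N - n) * (a + b) - n * a * b * (N - 1) = N - n \<longleftrightarrow> r = N / n" by simp
  show ?thesis
    using kx rx E1 E2 r01 ne unfolding K_def by auto
qed

end
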